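(* Let $\mathcal H$ be a separable complex Hilbert space, $A\in L(\mathcal H)^+$, $B\in L(\mathcal H)$ with closed range, and $\mathcal M$ a closed subspace such that $B(\mathcal M)$ is closed. Then $B$ admits an $A$-inverse restricted to $\mathcal M$ if and only if the pair $(A,B(\mathcal M))$ is compatible.
   Context: $\|z\|_A=\langle Az,z\rangle^{1/2}$. $G\in L(\mathcal H)$ is an $A$-inverse of $B$ restricted to $\mathcal M$ if $R(G)\subseteq\mathcal M$ and for each $y\in\mathcal H$, $\|y-BGy\|_A\le\|y-Bx\|_A$ for all $x\in\mathcal M$. $(A,\mathcal S)$ is compatible if there exists $Q\in L(\mathcal H)$ with $Q^2=Q$, $R(Q)=\mathcal S$, $AQ=Q^*A$. *)

theory Defs
  imports "HOL-Analysis.Analysis" "HOL-Library.Complex_Order"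
begin

class complex_vector_normed = real_normed_vector +
  fixes scaleC :: "complex \<Rightarrow> 'a \<Rightarrow> 'a"  (infixr \<open>*\<^sub>C\<close> 75)
  assumes scaleC_add_right: "a *\<^sub>C (x + y) = a *\<^sub>C x + a *\<^sub>C y"
    and scaleC_add_left: "(a + b) *\<^sub>C x = a *\<^sub>C x + b *\<^sub>C x"
    and scaleC_scaleC: "a *\<^sub>C (b *\<^sub>C x) = (a * b) *\<^sub>C x"
    and scaleC_one: "1 *\<^sub>C x = x"
    and scaleR_scaleC: "scaleR r x = complex_of_real r *\<^sub>C x"

class complex_inner_space = complex_vector_normed +
  fixes cinner :: "'a \<Rightarrow> 'a \<Rightarrow> complex"
  assumes cinner_conj: "cinner x y = cnj (cinner y x)"
    and cinner_add_left: "cinner (x + y) z = cinner x z + cinner y z"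
    and cinner_scaleC_left: "cinner (a *\<^sub>C x) y = a * cinner x y"
    and cinner_ge_zero: "0 \<le> cinner x x"
    and cinner_eq_zero_iff: "cinner x x = 0 \<longleftrightarrow> x = 0"
    and norm_eq_sqrt_cinner: "norm x = sqrt (Re (cinner x x))"

class chilbert_space = complex_inner_space + complete_space

definition separable_space :: "'a::topological_space itself \<Rightarrow> bool" where
  "separable_space _ \<longleftrightarrow> (\<exists>D::'a set. countable D \<and> closure D = UNIV)"

definition bounded_clinear :: "('a::complex_vector_normed \<Rightarrow> 'b::complex_vector_normed) \<Rightarrow> bool" where
  "bounded_clinear T \<longleftrightarrow>
     (\<forall>x y. T (x + y) = T x + T y) \<and> (\<forall>a x. T (a *\<^sub>C x) = a *\<^sub>C T x) \<and>
     (\<exists>K. \<forall>x. norm (T x) \<le> norm x * K)"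

definition closed_csubspace :: "'a::complex_vector_normed set \<Rightarrow> bool" where
  "closed_csubspace M \<longleftrightarrow> 0 \<in> M \<and> (\<forall>x\<in>M. \<forall>y\<in>M. x + y \<in> M) \<and>
     (\<forall>a. \<forall>x\<in>M. a *\<^sub>C x \<in> M) \<and> closed M"

definition adj :: "('a::complex_inner_space \<Rightarrow> 'a) \<Rightarrow> ('a \<Rightarrow> 'a)" where
  "adj T = (THE S. \<forall>x y. cinner (S x) y = cinner x (T y))"

definition positive_op :: "('a::complex_inner_space \<Rightarrow> 'a) \<Rightarrow> bool" where
  "positive_op A \<longleftrightarrow> bounded_clinear A \<and> (\<forall>x. 0 \<le> cinner (A x) x)"

definition normA :: "('a::complex_inner_space \<Rightarrow> 'a) \<Rightarrow> 'a \<Rightarrow> real" where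
  "normA A z = sqrt (Re (cinner (A z) z))"

definition is_A_inverse_restricted ::
  "('a::complex_inner_space \<Rightarrow> 'a) \<Rightarrow> ('a \<Rightarrow> 'a) \<Rightarrow> 'a set \<Rightarrow> ('a \<Rightarrow> 'a) \<Rightarrow> bool" where
  "is_A_inverse_restricted A B M G \<longleftrightarrow> bounded_clinear G \<and> range G \<subseteq> M \<and>
     (\<forall>y. \<forall>x\<in>M. normA A (y - B (G y)) \<le> normA A (y - B x))"

definition compatible :: "('a::complex_inner_space \<Rightarrow> 'a) \<Rightarrow> 'a set \<Rightarrow> bool" where
  "compatible A S \<longleftrightarrow> (\<exists>Q. bounded_clinear Q \<and> Q \<circ> Q = Q \<and> range Q = S \<and>
     A \<circ> Q = adj Q \<circ> A)"

end

theory Submission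
  imports Defs
begin


lemma scaleC_zero_left[simp]: "(0::complex) *\<^sub>C x = 0"
proof -
  have "0 *\<^sub>C x = 0 *\<^sub>C x + 0 *\<^sub>C x" by (metis add_0 scaleC_add_left)
  thus ?thesis by simp
qed

lemma scaleC_minus_one: "(-1::complex) *\<^sub>C x = - x"
proof -
  have "x + (-1::complex) *\<^sub>C x = 0"
    by (metis scaleC_one scaleC_add_left add.right_inverse scaleC_zero_left)
  thus ?thesis by (metis add.commute add_eq_0_iff)
qed

lemma scaleC_zero_right[simp]: "a *\<^sub>C (0::'a::complex_vector_normed) = 0"
proof -
  have "a *\<^sub>C 0 = a *\<^sub>C (0::'a) + a *\<^sub>C 0" by (metis add_0 scaleC_add_right)
  thus ?thesis by simp
qed

lemma scaleC_minus_right: "a *\<^sub>C (- x) = - (a *\<^sub>C (x::'a::complex_vector_normed))"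
  by (metis add.right_inverse add_eq_0_iff scaleC_add_right scaleC_zero_right)

lemma scaleC_diff_right: "a *\<^sub>C (x - y) = a *\<^sub>C x - a *\<^sub>C (y::'a::complex_vector_normed)"
  by (metis diff_conv_add_uminus scaleC_add_right scaleC_minus_right)

lemma scaleC_minus_left: "(- a) *\<^sub>C x = - (a *\<^sub>C (x::'a::complex_vector_normed))"
  by (metis mult_minus1 scaleC_minus_one scaleC_scaleC)

lemma scaleC_diff_left: "(a - b) *\<^sub>C x = a *\<^sub>C x - b *\<^sub>C (x::'a::complex_vector_normed)"
  by (metis diff_conv_add_uminus scaleC_add_left scaleC_minus_left)

lemma scaleC_of_real: "complex_of_real r *\<^sub>C x = scaleR r x"
  by (simp add: scaleR_scaleC)

context complex_inner_space begin end

lemma cinner_add_right: "cinner x (y + z) = cinner x y + cinner x (z::'a::complex_inner_space)"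
  by (metis cinner_conj cinner_add_left complex_cnj_add)

lemma cinner_scaleC_right: "cinner x (a *\<^sub>C y) = cnj a * cinner x (y::'a::complex_inner_space)"
  by (metis cinner_conj cinner_scaleC_left complex_cnj_mult)

lemma cinner_zero_left[simp]: "cinner 0 (y::'a::complex_inner_space) = 0"
  by (metis cinner_scaleC_left mult_zero_left scaleC_zero_left)

lemma cinner_zero_right[simp]: "cinner x (0::'a::complex_inner_space) = 0"
  by (metis cinner_conj cinner_zero_left complex_cnj_zero)

lemma cinner_minus_left: "cinner (- x) (y::'a::complex_inner_space) = - cinner x y"
  by (metis cinner_scaleC_left mult_minus1 scaleC_minus_one)

lemma cinner_minus_right: "cinner x (- y::'a::complex_inner_space) = - cinner x y"
  by (metis cinner_conj cinner_minus_left complex_cnj_minus)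

lemma cinner_diff_left: "cinner (x - y) (z::'a::complex_inner_space) = cinner x z - cinner y z"
  using cinner_add_left[of x "-y" z] by (simp add: cinner_minus_left)

lemma cinner_diff_right: "cinner x (y - z::'a::complex_inner_space) = cinner x y - cinner x z"
  using cinner_add_right[of x y "-z"] by (simp add: cinner_minus_right)

lemma cinner_self_real: "Im (cinner x (x::'a::complex_inner_space)) = 0"
  using cinner_ge_zero[of x] by (simp add: less_eq_complex_def)

lemma cinner_self_Re: "Re (cinner x (x::'a::complex_inner_space)) = (norm x)^2"
  using cinner_ge_zero[of x] by (simp add: norm_eq_sqrt_cinner less_eq_complex_def)

lemma cinner_self_norm: "cinner x (x::'a::complex_inner_space) = complex_of_real ((norm x)^2)"
  by (simp add: complex_eq_iff cinner_self_real cinner_self_Re)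

lemma norm_scaleC: "norm (a *\<^sub>C (x::'a::complex_inner_space)) = cmod a * norm x"
proof -
  have "cinner (a *\<^sub>C x) (a *\<^sub>C x) = (a * cnj a) * cinner x x"
    by (simp add: cinner_scaleC_left cinner_scaleC_right)
  also have "a * cnj a = complex_of_real ((cmod a)^2)" by (metis complex_norm_square of_real_power)
  finally have "Re (cinner (a *\<^sub>C x) (a *\<^sub>C x)) = (cmod a)^2 * (norm x)^2"
    by (simp add: cinner_self_norm)
  hence "(norm (a *\<^sub>C x))^2 = (cmod a * norm x)^2"
    by (simp add: cinner_self_Re power_mult_distrib)
  thus ?thesis by (simp add: power2_eq_iff_nonneg)
qed

lemma cinner_scaleR_left: "cinner (scaleR r x) (y::'a::complex_inner_space) = of_real r * cinner x y"
  by (simp add: scaleR_scaleC cinner_scaleC_left)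

lemma cinner_scaleR_right: "cinner x (scaleR r y::'a::complex_inner_space) = of_real r * cinner x y"
  by (simp add: scaleR_scaleC cinner_scaleC_right)

lemma norm_sq_add: "(norm (x + y::'a::complex_inner_space))^2 = (norm x)^2 + (norm y)^2 + 2 * Re (cinner x y)"
proof -
  have "Re (cinner (x+y) (x+y)) = Re (cinner x x) + Re (cinner y y) + Re (cinner x y) + Re (cinner y x)"
    by (simp add: cinner_add_left cinner_add_right)
  moreover have "Re (cinner y x) = Re (cinner x y)" by (metis cinner_conj complex_cnj_cnj cnj.simps(1))
  ultimately show ?thesis by (simp add: cinner_self_Re)
qed

lemma norm_sq_diff: "(norm (x - y::'a::complex_inner_space))^2 = (norm x)^2 + (norm y)^2 - 2 * Re (cinner x y)"
  using norm_sq_add[of x "-y"] by (simp add: cinner_minus_right)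

lemma cinner_eq_zero_all: "(\<And>y. cinner x y = 0) \<Longrightarrow> x = (0::'a::complex_inner_space)"
  using cinner_eq_zero_iff by blast

lemma cinner_ext: "(\<And>y. cinner x y = cinner z y) \<Longrightarrow> x = (z::'a::complex_inner_space)"
  using cinner_eq_zero_all[of "x - z"] by (simp add: cinner_diff_left)

lemma Cauchy_Schwarz: "cmod (cinner x (y::'a::complex_inner_space)) \<le> norm x * norm y"
proof (cases "y = 0")
  case True thus ?thesis by simp
next
  case False
  define n where "n = (norm y)^2"
  define s where "s = cinner x y"
  define c where "c = s / complex_of_real n"
  have np: "n > 0" using False by (simp add: n_def)
  have e1: "Re (cnj c * s) = (cmod s)^2 / n"
  proof -
    have "cnj c * s = (cnj s * s) / complex_of_real n" by (simp add: c_def)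
    also have "cnj s * s = complex_of_real ((cmod s)^2)" by (metis complex_norm_square mult.commute of_real_power)
    finally show ?thesis by (simp add: Re_divide_of_real)
  qed
  have e2: "(cmod c)^2 * n = (cmod s)^2 / n"
    using np by (simp add: c_def norm_divide power_divide power2_eq_square)
  have "0 \<le> (norm (x - c *\<^sub>C y))^2" by simp
  also have "\<dots> = (norm x)^2 + (cmod c)^2 * n - 2 * Re (cnj c * s)"
    by (simp add: norm_sq_diff norm_scaleC cinner_scaleC_right power_mult_distrib n_def s_def)
  finally have "0 \<le> (norm x)^2 - (cmod s)^2 / n" using e1 e2 by simp
  hence "(cmod s)^2 / n \<le> (norm x)^2" by simp
  hence "(cmod s)^2 \<le> (norm x)^2 * n" using np by (simp add: divide_le_eq)
  hence "(cmod s)^2 \<le> (norm x * norm y)^2" by (simp add: n_def power_mult_distrib)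
  thus ?thesis unfolding s_def by (meson norm_ge_zero mult_nonneg_nonneg power2_le_imp_le)
qed



lemma bcl_add: "bounded_clinear T \<Longrightarrow> T (x + y) = T x + T y"
  by (simp add: bounded_clinear_def)
lemma bcl_scaleC: "bounded_clinear T \<Longrightarrow> T (a *\<^sub>C x) = a *\<^sub>C T x"
  by (simp add: bounded_clinear_def)
lemma bcl_zero: "bounded_clinear T \<Longrightarrow> T 0 = 0"
  by (metis bcl_scaleC scaleC_zero_left)
lemma bcl_minus: "bounded_clinear T \<Longrightarrow> T (- x) = - T x"
  by (metis bcl_scaleC scaleC_minus_one)
lemma bcl_diff: "bounded_clinear T \<Longrightarrow> T (x - y) = T x - T y"
  using bcl_add[of T x "-y"] bcl_minus[of T y] by simp
lemma bcl_scaleR: "bounded_clinear T \<Longrightarrow> T (scaleR r x) = scaleR r (T x)"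
  by (simp add: scaleR_scaleC bcl_scaleC)
lemma bcl_bound: "bounded_clinear T \<Longrightarrow> \<exists>K. \<forall>x. norm (T x) \<le> norm x * K"
  by (simp add: bounded_clinear_def)
lemma bcl_bounded_linear: "bounded_clinear T \<Longrightarrow> bounded_linear T"
  using bcl_bound[of T] by (metis bounded_linear_intro bcl_add bcl_scaleR)

lemma bcl_id: "bounded_clinear (\<lambda>x. x)"
  unfolding bounded_clinear_def by (auto intro: exI[of _ 1])

lemma bcl_comp: "bounded_clinear S \<Longrightarrow> bounded_clinear T \<Longrightarrow> bounded_clinear (\<lambda>x. S (T x))"
proof -
  assume s: "bounded_clinear S" and t: "bounded_clinear T"
  obtain K1 where k1: "\<forall>x. norm (S x) \<le> norm x * K1" using bcl_bound[OF s] by blast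
  obtain K2 where k2: "\<forall>x. norm (T x) \<le> norm x * K2" using bcl_bound[OF t] by blast
  have "norm (S (T x)) \<le> norm x * (max K2 0 * max K1 0)" for x
  proof -
    have "norm (S (T x)) \<le> norm (T x) * max K1 0" using k1 
      by (meson max.cobounded1 mult_left_mono norm_ge_zero order_trans)
    also have "\<dots> \<le> (norm x * max K2 0) * max K1 0"
      by (meson k2 max.cobounded1 max.cobounded2 mult_left_mono mult_right_mono norm_ge_zero order_trans)
    finally show ?thesis by (simp add: mult.assoc)
  qed
  thus ?thesis using s t unfolding bounded_clinear_def by auto
qed

lemma bcl_plus: "bounded_clinear S \<Longrightarrow> bounded_clinear T \<Longrightarrow> bounded_clinear (\<lambda>x. S x + T x)"
proof -
  assume s: "bounded_clinear S" and t: "bounded_clinear T"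
  obtain K1 where k1: "\<forall>x. norm (S x) \<le> norm x * K1" using bcl_bound[OF s] by blast
  obtain K2 where k2: "\<forall>x. norm (T x) \<le> norm x * K2" using bcl_bound[OF t] by blast
  have "norm (S x + T x) \<le> norm x * (K1 + K2)" for x
    using k1 k2 norm_triangle_ineq[of "S x" "T x"] by (simp add: distrib_left) (smt (verit))
  thus ?thesis using s t unfolding bounded_clinear_def
    by (auto simp: scaleC_add_right)
qed

lemma bcl_minus_fun: "bounded_clinear S \<Longrightarrow> bounded_clinear (\<lambda>x. - S x)"
  unfolding bounded_clinear_def by (auto simp: scaleC_minus_right)

lemma bcl_diff_fun: "bounded_clinear S \<Longrightarrow> bounded_clinear T \<Longrightarrow> bounded_clinear (\<lambda>x. S x - T x)"
  using bcl_plus[of S "\<lambda>x. - T x"] bcl_minus_fun[of T] by simp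

section \<open>Positive operators\<close>

lemma pos_selfadj:
  assumes "positive_op A"
  shows "cinner (A x) y = cinner x (A y)"
proof -
  have bA: "bounded_clinear A" using assms by (simp add: positive_op_def)
  have im: "Im (cinner (A z) z) = 0" for z
    using assms by (simp add: positive_op_def less_eq_complex_def)
  define h where "h u v = cinner (A u) v" for u v
  have h1: "h (x + y) (x + y) = h x x + h y y + h x y + h y x"
    by (simp add: h_def bcl_add[OF bA] cinner_add_left cinner_add_right)
  have h2: "h (x + \<i> *\<^sub>C y) (x + \<i> *\<^sub>C y) = h x x + h y y - \<i> * h x y + \<i> * h y x"
    by (simp add: h_def bcl_add[OF bA] bcl_scaleC[OF bA] cinner_add_left cinner_add_right
        cinner_scaleC_left cinner_scaleC_right algebra_simps)
  have "Im (h x y + h y x) = 0" using h1 im[of "x+y"] im[of x] im[of y] by (simp add: h_def)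
  moreover have "Im (- \<i> * h x y + \<i> * h y x) = 0"
    using h2 im[of "x + \<i> *\<^sub>C y"] im[of x] im[of y] by (simp add: h_def)
  ultimately have "h y x = cnj (h x y)" by (simp add: complex_eq_iff)
  thus ?thesis unfolding h_def by (metis cinner_conj)
qed

lemma var_zero:
  assumes "\<And>\<tau>::complex. 2 * Re (cnj \<tau> * c) \<le> (cmod \<tau>)^2 * q"
  shows "c = 0"
proof (rule ccontr)
  assume c: "c \<noteq> 0"
  define e where "e = 1 / (\<bar>q\<bar> + 1)"
  define cc where "cc = (cmod c)^2"
  have cc: "cc > 0" using c by (simp add: cc_def)
  have e: "e > 0" by (simp add: e_def add_pos_nonneg)
  have f1: "2 * Re (cnj (complex_of_real e * c) * c) \<le> (cmod (complex_of_real e * c))^2 * q"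
    by (rule assms)
  have f2: "Re (cnj (complex_of_real e * c) * c) = e * cc"
  proof -
    have "cnj (complex_of_real e * c) * c = complex_of_real e * (cnj c * c)" by simp
    also have "cnj c * c = complex_of_real cc" unfolding cc_def
      by (metis complex_norm_square mult.commute of_real_power)
    finally show ?thesis by (metis Re_complex_of_real of_real_mult)
  qed
  have f3: "(cmod (complex_of_real e * c))^2 = e^2 * cc"
    using e by (simp add: norm_mult power_mult_distrib cc_def)
  from f1 have "2 * (e * cc) \<le> (e^2 * cc) * q" unfolding f2 f3 .
  hence "(2 * e) * cc \<le> (e^2 * q) * cc" by (simp add: algebra_simps)
  hence "2 * e \<le> e^2 * q" using cc by simp
  hence "2 \<le> e * q" using e by (simp add: power2_eq_square mult.assoc)
  moreover have "e * q < 1" using e unfolding e_def by (simp add: field_simps abs_if)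
  ultimately show False by simp
qed

lemma quad_expand:
  assumes "positive_op A"
  shows "Re (cinner (A (r - \<tau> *\<^sub>C t)) (r - \<tau> *\<^sub>C t)) =
    Re (cinner (A r) r) - 2 * Re (cnj \<tau> * cinner (A r) t) + (cmod \<tau>)^2 * Re (cinner (A t) t)"
proof -
  have bA: "bounded_clinear A" using assms by (simp add: positive_op_def)
  have sa: "cinner (A t) r = cnj (cinner (A r) t)"
    using pos_selfadj[OF assms] cinner_conj by metis
  have "cinner (A (r - \<tau> *\<^sub>C t)) (r - \<tau> *\<^sub>C t) =
      cinner (A r) r - cnj \<tau> * cinner (A r) t - \<tau> * cinner (A t) r + (\<tau> * cnj \<tau>) * cinner (A t) t"
    by (simp add: bcl_diff[OF bA] bcl_scaleC[OF bA] cinner_diff_left cinner_diff_right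
        cinner_scaleC_left cinner_scaleC_right algebra_simps)
  also have "\<tau> * cnj \<tau> = complex_of_real ((cmod \<tau>)^2)" by (metis complex_norm_square of_real_power)
  finally have eq: "cinner (A (r - \<tau> *\<^sub>C t)) (r - \<tau> *\<^sub>C t) =
      cinner (A r) r - cnj \<tau> * cinner (A r) t - \<tau> * cnj (cinner (A r) t) + complex_of_real ((cmod \<tau>)^2) * cinner (A t) t"
    using sa by simp
  have "Re (\<tau> * cnj (cinner (A r) t)) = Re (cnj \<tau> * cinner (A r) t)" by simp
  thus ?thesis unfolding eq by simp
qed

lemma min_orth:
  assumes "positive_op A"
    and "\<And>\<tau>. Re (cinner (A r) r) \<le> Re (cinner (A (r - \<tau> *\<^sub>C t)) (r - \<tau> *\<^sub>C t))"
  shows "cinner (A r) t = 0"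
proof (rule var_zero[where q = "Re (cinner (A t) t)"])
  fix \<tau> show "2 * Re (cnj \<tau> * cinner (A r) t) \<le> (cmod \<tau>)^2 * Re (cinner (A t) t)"
    using assms(2)[of \<tau>] quad_expand[OF assms(1), of r \<tau> t] by simp
qed

lemma pos_kernel:
  assumes "positive_op A" and "Re (cinner (A u) u) = 0"
  shows "A u = 0"
proof (rule cinner_eq_zero_all)
  fix w show "cinner (A u) w = 0"
  proof (rule min_orth[OF assms(1)])
    fix \<tau> show "Re (cinner (A u) u) \<le> Re (cinner (A (u - \<tau> *\<^sub>C w)) (u - \<tau> *\<^sub>C w))"
      using assms by (simp add: positive_op_def less_eq_complex_def)
  qed
qed

lemma positive_id: "positive_op (\<lambda>x. x)"
  by (simp add: positive_op_def bcl_id cinner_ge_zero)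



section \<open>Projection theorem\<close>

lemma csub_scaleR: "closed_csubspace K \<Longrightarrow> x \<in> K \<Longrightarrow> scaleR r x \<in> K"
  by (simp add: closed_csubspace_def scaleR_scaleC)
lemma csub_add: "closed_csubspace K \<Longrightarrow> x \<in> K \<Longrightarrow> y \<in> K \<Longrightarrow> x + y \<in> K"
  by (simp add: closed_csubspace_def)
lemma csub_scaleC: "closed_csubspace K \<Longrightarrow> x \<in> K \<Longrightarrow> a *\<^sub>C x \<in> K"
  by (simp add: closed_csubspace_def)
lemma csub_zero: "closed_csubspace K \<Longrightarrow> 0 \<in> K"
  by (simp add: closed_csubspace_def)
lemma csub_closed: "closed_csubspace K \<Longrightarrow> closed K"
  by (simp add: closed_csubspace_def)
lemma csub_minus: "closed_csubspace K \<Longrightarrow> x \<in> K \<Longrightarrow> - x \<in> K"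
  by (metis csub_scaleC scaleC_minus_one)
lemma csub_diff: "closed_csubspace K \<Longrightarrow> x \<in> K \<Longrightarrow> y \<in> K \<Longrightarrow> x - y \<in> K"
  using csub_add[of K x "-y"] csub_minus[of K y] by simp

lemma parallelogram:
  "(norm (a + b::'a::complex_inner_space))^2 + (norm (a - b))^2 = 2 * (norm a)^2 + 2 * (norm b)^2"
  by (simp add: norm_sq_add norm_sq_diff)

lemma min_exists:
  fixes x :: "'a::chilbert_space"
  assumes K: "closed_csubspace K"
  shows "\<exists>p\<in>K. \<forall>k\<in>K. norm (x - p) \<le> norm (x - k)"
proof -
  define D where "D = (\<lambda>k. norm (x - k)) ` K"
  define d where "d = Inf D"
  have Dne: "D \<noteq> {}" using csub_zero[OF K] by (auto simp: D_def)
  have bdd: "bdd_below D" by (auto simp: D_def intro!: bdd_belowI[of _ 0])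
  have dle: "d \<le> norm (x - k)" if "k \<in> K" for k
    unfolding d_def by (rule cInf_lower) (use that bdd in \<open>auto simp: D_def\<close>)
  have d0: "d \<ge> 0" unfolding d_def using Dne by (intro cInf_greatest) (auto simp: D_def)
  have "\<exists>k\<in>K. (norm (x - k))^2 \<le> d^2 + 1 / real (Suc n)" for n
  proof -
    have "d < sqrt (d^2 + 1 / real (Suc n))"
      using d0 by (metis less_add_same_cancel1 of_nat_0_less_iff real_sqrt_abs real_sqrt_less_mono
          zero_less_Suc zero_less_divide_1_iff abs_of_nonneg)
    then obtain z where "z \<in> D" "z < sqrt (d^2 + 1 / real (Suc n))"
      using cInf_lessD[OF Dne] unfolding d_def by blast
    then obtain k where k: "k \<in> K" "norm (x - k) < sqrt (d^2 + 1 / real (Suc n))"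
      by (auto simp: D_def)
    have a0: "0 \<le> d^2 + 1 / real (Suc n)" by simp
    have "(norm (x - k))^2 < (sqrt (d^2 + 1 / real (Suc n)))^2"
      using k(2) by (intro power_strict_mono) auto
    hence "(norm (x - k))^2 \<le> d^2 + 1 / real (Suc n)" using a0 by simp
    thus ?thesis using k by blast
  qed
  then obtain kk where kk: "\<And>n. kk n \<in> K" "\<And>n. (norm (x - kk n))^2 \<le> d^2 + 1 / real (Suc n)"
    by metis
  have est: "(norm (kk m - kk n))^2 \<le> 2 / real (Suc n) + 2 / real (Suc m)" for m n
  proof -
    define mid where "mid = scaleR (1/2) (kk n + kk m)"
    have "mid \<in> K" unfolding mid_def by (intro csub_scaleR csub_add K kk)
    hence "d \<le> norm (x - mid)" by (rule dle)
    hence "d^2 \<le> (norm (x - mid))^2" using d0 by (simp add: power_mono)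
    moreover have "(x - kk n) + (x - kk m) = scaleR 2 (x - mid)"
      by (simp add: mid_def algebra_simps scaleR_2)
    hence "(norm ((x - kk n) + (x - kk m)))^2 = 4 * (norm (x - mid))^2"
      by (simp add: power_mult_distrib)
    moreover have "(norm ((x - kk n) - (x - kk m)))^2 = (norm (kk m - kk n))^2" by simp
    ultimately have "(norm (kk m - kk n))^2 \<le> 2 * (norm (x - kk n))^2 + 2 * (norm (x - kk m))^2 - 4 * d^2"
      using parallelogram[of "x - kk n" "x - kk m"] by linarith
    thus ?thesis using kk(2)[of n] kk(2)[of m] by linarith
  qed
  have "Cauchy kk"
    unfolding Cauchy_def
  proof (intro allI impI)
    fix e :: real assume e: "e > 0"
    obtain N where N: "inverse (real (Suc N)) < e^2 / 4" using reals_Archimedean[of "e^2/4"] e by auto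
    show "\<exists>M. \<forall>m\<ge>M. \<forall>n\<ge>M. dist (kk m) (kk n) < e"
    proof (intro exI allI impI)
      fix m n assume mn: "N \<le> m" "N \<le> n"
      have "2 / real (Suc n) \<le> 2 / real (Suc N)" "2 / real (Suc m) \<le> 2 / real (Suc N)"
        using mn by (simp_all add: frac_le)
      moreover have "4 / real (Suc N) < e^2" using N by (simp add: field_simps)
      ultimately have "(norm (kk m - kk n))^2 < e^2"
        using est[of m n] by linarith
      hence "norm (kk m - kk n) < e" using e by (simp add: power_less_imp_less_base)
      thus "dist (kk m) (kk n) < e" by (simp add: dist_norm)
    qed
  qed
  then obtain p where p: "kk \<longlonglongrightarrow> p" using Cauchy_convergent_iff convergent_def by blast
  have pK: "p \<in> K" using closed_sequentially[OF csub_closed[OF K] kk(1) p] .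
  have l1: "(\<lambda>n. (norm (x - kk n))^2) \<longlonglongrightarrow> (norm (x - p))^2"
    by (intro tendsto_intros p)
  have l2: "(\<lambda>n. d^2 + 1 / real (Suc n)) \<longlonglongrightarrow> d^2 + 0"
    by (intro tendsto_intros LIMSEQ_Suc[OF lim_inverse_n'] )
  have "(norm (x - p))^2 \<le> d^2 + 0"
    by (rule LIMSEQ_le[OF l1 l2]) (intro exI[of _ 0] allI impI kk(2))
  hence "norm (x - p) \<le> d" using d0 power2_le_imp_le[of "norm (x - p)" d] by simp
  thus ?thesis using pK dle by (meson order_trans)
qed

lemma proj_exists:
  fixes x :: "'a::chilbert_space"
  assumes K: "closed_csubspace K"
  shows "\<exists>p\<in>K. \<forall>k\<in>K. cinner (x - p) k = 0"
proof -
  obtain p where p: "p \<in> K" "\<And>k. k \<in> K \<Longrightarrow> norm (x - p) \<le> norm (x - k)"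
    using min_exists[OF K] by blast
  have "cinner (x - p) k = 0" if k: "k \<in> K" for k
  proof -
    have "cinner ((\<lambda>x. x) (x - p)) k = 0"
    proof (rule min_orth[OF positive_id])
      fix \<tau>
      have "p + \<tau> *\<^sub>C k \<in> K" by (intro csub_add csub_scaleC K p k)
      hence "norm (x - p) \<le> norm (x - (p + \<tau> *\<^sub>C k))" by (rule p(2))
      hence "(norm (x - p))^2 \<le> (norm (x - p - \<tau> *\<^sub>C k))^2" by (simp add: power_mono diff_diff_eq)
      thus "Re (cinner (x - p) (x - p)) \<le> Re (cinner (x - p - \<tau> *\<^sub>C k) (x - p - \<tau> *\<^sub>C k))"
        by (simp add: cinner_self_Re)
    qed
    thus ?thesis by simp
  qed
  thus ?thesis using p(1) by blast
qed

definition proj :: "'a::chilbert_space set \<Rightarrow> 'a \<Rightarrow> 'a" where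
  "proj K x = (SOME p. p \<in> K \<and> (\<forall>k\<in>K. cinner (x - p) k = 0))"

lemma proj_prop:
  assumes "closed_csubspace K"
  shows "proj K x \<in> K" "\<And>k. k \<in> K \<Longrightarrow> cinner (x - proj K x) k = 0"
  using someI_ex[OF proj_exists[OF assms, of x, unfolded Bex_def]] unfolding proj_def by auto

lemma proj_unique:
  assumes K: "closed_csubspace K" and "p \<in> K" and "\<And>k. k \<in> K \<Longrightarrow> cinner (x - p) k = 0"
  shows "proj K x = p"
proof -
  have d: "proj K x - p \<in> K" by (intro csub_diff K proj_prop assms)
  have "cinner (proj K x - p) (proj K x - p) = cinner (x - p) (proj K x - p) - cinner (x - proj K x) (proj K x - p)"
    using cinner_diff_left[of "x - p" "x - proj K x" "proj K x - p"] by (simp add: algebra_simps)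
  also have "\<dots> = 0" using assms(3)[OF d] proj_prop(2)[OF K d, of x] by simp
  finally have "proj K x - p = 0" using cinner_eq_zero_iff by blast
  thus ?thesis by simp
qed

lemma proj_id: "closed_csubspace K \<Longrightarrow> k \<in> K \<Longrightarrow> proj K k = k"
  by (rule proj_unique) auto

lemma proj_norm: assumes K: "closed_csubspace K" shows "norm (proj K x) \<le> norm x"
proof -
  have "cinner (x - proj K x) (proj K x) = 0" by (intro proj_prop K)
  hence "(norm x)^2 = (norm (x - proj K x))^2 + (norm (proj K x))^2"
    using norm_sq_add[of "x - proj K x" "proj K x"] by simp
  hence "(norm (proj K x))^2 \<le> (norm x)^2" by simp
  thus ?thesis using power2_le_imp_le[of "norm (proj K x)" "norm x"] by simp
qed

lemma proj_bcl: assumes K: "closed_csubspace K" shows "bounded_clinear (proj K)"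
  unfolding bounded_clinear_def
proof (intro conjI allI)
  fix x y
  show "proj K (x + y) = proj K x + proj K y"
  proof (rule proj_unique[OF K])
    show "proj K x + proj K y \<in> K" by (intro csub_add K proj_prop)
    fix k assume k: "k \<in> K"
    have eq: "x + y - (proj K x + proj K y) = (x - proj K x) + (y - proj K y)" by simp
    show "cinner (x + y - (proj K x + proj K y)) k = 0"
      unfolding eq cinner_add_left using proj_prop(2)[OF K k, of x] proj_prop(2)[OF K k, of y] by simp
  qed
next
  fix a x
  show "proj K (a *\<^sub>C x) = a *\<^sub>C proj K x"
  proof (rule proj_unique[OF K])
    show "a *\<^sub>C proj K x \<in> K" by (intro csub_scaleC K proj_prop)
    fix k assume k: "k \<in> K"
    have "a *\<^sub>C x - a *\<^sub>C proj K x = a *\<^sub>C (x - proj K x)" by (simp add: scaleC_diff_right)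
    thus "cinner (a *\<^sub>C x - a *\<^sub>C proj K x) k = 0"
      using proj_prop(2)[OF K k, of x] by (simp add: cinner_scaleC_left)
  qed
next
  show "\<exists>K'. \<forall>x. norm (proj K x) \<le> norm x * K'"
    using proj_norm[OF K] by (intro exI[of _ 1]) simp
qed



section \<open>Riesz representation and adjoints\<close>

lemma riesz:
  fixes \<phi> :: "'a::chilbert_space \<Rightarrow> complex"
  assumes add: "\<And>x y. \<phi> (x + y) = \<phi> x + \<phi> y"
    and sc: "\<And>a x. \<phi> (a *\<^sub>C x) = a * \<phi> x"
    and bd: "\<And>x. cmod (\<phi> x) \<le> norm x * K"
  shows "\<exists>z. \<forall>y. \<phi> y = cinner y z"
proof (cases "\<forall>y. \<phi> y = 0")
  case True thus ?thesis by (intro exI[of _ 0]) simp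
next
  case False
  then obtain y0 where y0: "\<phi> y0 \<noteq> 0" by blast
  have z0: "\<phi> 0 = 0" using sc[of 0 0] by simp
  have bl: "bounded_linear \<phi>"
  proof (rule bounded_linear_intro[OF add])
    show "\<phi> (scaleR r x) = scaleR r (\<phi> x)" for r x
      by (simp add: scaleR_scaleC sc scaleR_conv_of_real)
    show "norm (\<phi> x) \<le> norm x * K" for x using bd by simp
  qed
  define N where "N = \<phi> -` {0}"
  have N: "closed_csubspace N"
    unfolding closed_csubspace_def N_def
  proof (intro conjI ballI allI)
    show "closed (\<phi> -` {0})"
      by (rule continuous_closed_vimage) (auto intro: linear_continuous_at[OF bl])
  qed (auto simp: z0 add sc)
  define w where "w = y0 - proj N y0"
  have pN: "\<phi> (proj N y0) = 0" using proj_prop(1)[OF N, of y0] by (simp add: N_def)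
  have phw: "\<phi> w \<noteq> 0"
    using y0 pN add[of "y0 - proj N y0" "proj N y0"] by (simp add: w_def)
  have worth: "cinner w k = 0" if "k \<in> N" for k
    unfolding w_def by (rule proj_prop(2)[OF N that])
  have wne: "w \<noteq> 0" using phw z0 by auto
  have ww: "cinner w w \<noteq> 0" using wne cinner_eq_zero_iff by blast
  have key: "cinner y w = (\<phi> y / \<phi> w) * cinner w w" for y
  proof -
    define v where "v = y - (\<phi> y / \<phi> w) *\<^sub>C w"
    have "\<phi> y = \<phi> v + (\<phi> y / \<phi> w) * \<phi> w"
      using add[of v "(\<phi> y / \<phi> w) *\<^sub>C w"] sc[of "\<phi> y / \<phi> w" w] by (simp add: v_def)
    hence "\<phi> v = 0" using phw by simp
    hence "v \<in> N" by (simp add: N_def)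
    hence "cinner v w = 0" using worth[of v] by (metis cinner_conj complex_cnj_zero)
    thus ?thesis by (simp add: v_def cinner_diff_left cinner_scaleC_left)
  qed
  define z where "z = (cnj (\<phi> w) / cnj (cinner w w)) *\<^sub>C w"
  have "\<phi> y = cinner y z" for y
    using key[of y] phw ww by (simp add: z_def cinner_scaleC_right)
  thus ?thesis by blast
qed

lemma adj_exists:
  fixes T :: "'a::chilbert_space \<Rightarrow> 'a"
  assumes T: "bounded_clinear T"
  shows "\<exists>S. \<forall>x y. cinner (S x) y = cinner x (T y)"
proof -
  obtain K where K: "\<And>x. norm (T x) \<le> norm x * K" using bcl_bound[OF T] by blast
  have "\<exists>z. \<forall>y. cinner (T y) x = cinner y z" for x
  proof (rule riesz[where K = "K * norm x"])
    show "cinner (T (a + b)) x = cinner (T a) x + cinner (T b) x" for a b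
      by (simp add: bcl_add[OF T] cinner_add_left)
    show "cinner (T (a *\<^sub>C b)) x = a * cinner (T b) x" for a b
      by (simp add: bcl_scaleC[OF T] cinner_scaleC_left)
    show "cmod (cinner (T y) x) \<le> norm y * (K * norm x)" for y
    proof -
      have "cmod (cinner (T y) x) \<le> norm (T y) * norm x" by (rule Cauchy_Schwarz)
      also have "\<dots> \<le> (norm y * K) * norm x" using K[of y] by (simp add: mult_right_mono)
      finally show ?thesis by (simp add: mult.assoc)
    qed
  qed
  then obtain S where S: "\<And>x y. cinner (T y) x = cinner y (S x)" by metis
  have "cinner (S x) y = cinner x (T y)" for x y
    by (metis S cinner_conj)
  thus ?thesis by blast
qed

lemma adj_prop:
  fixes T :: "'a::chilbert_space \<Rightarrow> 'a"
  assumes T: "bounded_clinear T"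
  shows "cinner (adj T x) y = cinner x (T y)"
proof -
  have ex1: "\<exists>!S. \<forall>x y. cinner (S x) y = cinner x (T y)"
  proof -
    obtain S where S: "\<forall>x y. cinner (S x) y = cinner x (T y)" using adj_exists[OF T] by blast
    have "S' = S" if "\<forall>x y. cinner (S' x) y = cinner x (T y)" for S'
      using that S by (intro ext cinner_ext) simp
    thus ?thesis using S by blast
  qed
  show ?thesis using theI'[OF ex1] unfolding adj_def by blast
qed

lemma adj_apply:
  fixes T :: "'a::chilbert_space \<Rightarrow> 'a"
  assumes T: "bounded_clinear T" and "\<And>y. cinner u y = cinner x (T y)"
  shows "adj T x = u"
  by (rule cinner_ext) (simp add: adj_prop[OF T] assms(2))



section \<open>Open mapping (Baire)\<close>

instance chilbert_space \<subseteq> banach ..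

lemma baire_step:
  fixes S :: "'a::complete_space set" and F :: "nat \<Rightarrow> 'a set"
  assumes S: "closed S" "S \<noteq> {}" and F: "\<And>n. closed (F n)" "\<And>n. F n \<subseteq> S"
    and cov: "S \<subseteq> (\<Union>n. F n)"
  shows "\<exists>n y r. r > 0 \<and> y \<in> S \<and> S \<inter> ball y r \<subseteq> F n"
proof (rule ccontr)
  assume neg: "\<not> ?thesis"
  let ?X = "top_of_set S"
  have cm: "completely_metrizable_space ?X"
    by (rule completely_metrizable_space_closedin[OF completely_metrizable_space_euclidean])
       (use S(1) closed_closedin in blast)
  have emp: "?X interior_of T = {}" if TF: "T \<in> range F" for T
  proof -
    obtain n where T: "T = F n" using TF by blast
    show ?thesis unfolding interior_of_eq_empty
    proof (intro allI impI)
      fix U assume U: "openin ?X U \<and> U \<subseteq> T"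
      show "U = {}"
      proof (rule ccontr)
        assume "U \<noteq> {}"
        then obtain y where y: "y \<in> U" by blast
        have "openin ?X U" using U by blast
        then obtain V where V: "open V" "U = S \<inter> V" unfolding openin_open by blast
        obtain r where r: "r > 0" "ball y r \<subseteq> V" using V y open_contains_ball by blast
        have "S \<inter> ball y r \<subseteq> F n" using r V U T by blast
        moreover have "y \<in> S" using V y by blast
        ultimately show False using neg r by blast
      qed
    qed
  qed
  have "?X interior_of \<Union>(range F) = {}"
  proof (rule Baire_category_alt)
    show "completely_metrizable_space ?X \<or> locally_compact_space ?X \<and> regular_space ?X" using cm by blast
    show "countable (range F)" by simp
    fix T assume "T \<in> range F"
    thus "closedin ?X T \<and> ?X interior_of T = {}"
      using emp F by (auto simp: closedin_closed intro!: exI[where x=T]) blast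
  qed
  moreover have "\<Union>(range F) = S" using cov F(2) by blast
  ultimately show False using S(2) by (metis interior_of_topspace topspace_euclidean_subtopology)
qed

lemma bcl_cont: "bounded_clinear B \<Longrightarrow> isCont B x"
  using bcl_bounded_linear linear_continuous_at by blast

lemma image_csub:
  assumes B: "bounded_clinear B" and M: "closed_csubspace M" and cl: "closed (B ` M)"
  shows "closed_csubspace (B ` M)"
  unfolding closed_csubspace_def
proof (intro conjI ballI allI cl)
  show "0 \<in> B ` M" using csub_zero[OF M] bcl_zero[OF B] by (metis image_eqI)
  fix x y assume "x \<in> B ` M" "y \<in> B ` M"
  then obtain a b where "a \<in> M" "b \<in> M" "x = B a" "y = B b" by blast
  thus "x + y \<in> B ` M" using csub_add[OF M] bcl_add[OF B] by (metis image_eqI)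
next
  fix c x assume "x \<in> B ` M"
  then obtain a where "a \<in> M" "x = B a" by blast
  thus "c *\<^sub>C x \<in> B ` M" using csub_scaleC[OF M] bcl_scaleC[OF B] by (metis image_eqI)
qed

lemma open_mapping:
  fixes B :: "'a::chilbert_space \<Rightarrow> 'a"
  assumes B: "bounded_clinear B" and M: "closed_csubspace M" and cl: "closed (B ` M)"
  shows "\<exists>C. \<forall>s\<in>B ` M. \<exists>x\<in>M. B x = s \<and> norm x \<le> C * norm s"
proof -
  define S where "S = B ` M"
  have Ssub: "closed_csubspace S" unfolding S_def by (rule image_csub[OF B M cl])
  define F where "F n = closure (B ` (M \<inter> cball 0 (real n)))" for n
  have "\<exists>n y r. r > 0 \<and> y \<in> S \<and> S \<inter> ball y r \<subseteq> F n"
  proof (rule baire_step)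
    show "closed S" "S \<noteq> {}" using cl csub_zero[OF Ssub] by (auto simp: S_def)
    show "closed (F n)" for n by (simp add: F_def)
    show "F n \<subseteq> S" for n unfolding F_def S_def
      by (rule closure_minimal) (use cl in auto)
    show "S \<subseteq> (\<Union>n. F n)"
    proof
      fix s assume "s \<in> S"
      then obtain x where x: "x \<in> M" "s = B x" by (auto simp: S_def)
      obtain n where n: "norm x \<le> real n" using real_arch_simple by blast
      have "s \<in> F n" unfolding F_def using x n by (intro closure_subset[THEN subsetD]) auto
      thus "s \<in> (\<Union>n. F n)" by blast
    qed
  qed
  then obtain n y r where r: "r > 0" "y \<in> S" "S \<inter> ball y r \<subseteq> F n" by blast
  \<comment> \<open>symmetrisation\<close>
  have half: "scaleR (1/2) (u - v) \<in> F n" if uv: "u \<in> F n" "v \<in> F n" for u v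
  proof -
    obtain a where a: "\<And>k. a k \<in> B ` (M \<inter> cball 0 (real n))" "a \<longlonglongrightarrow> u"
      using uv(1) unfolding F_def closure_sequential by blast
    obtain b where b: "\<And>k. b k \<in> B ` (M \<inter> cball 0 (real n))" "b \<longlonglongrightarrow> v"
      using uv(2) unfolding F_def closure_sequential by blast
    have "\<forall>k. \<exists>p q. p \<in> M \<inter> cball 0 (real n) \<and> q \<in> M \<inter> cball 0 (real n) \<and> a k = B p \<and> b k = B q"
      using a(1) b(1) by blast
    then obtain p q where pq: "\<And>k. p k \<in> M \<inter> cball 0 (real n)" "\<And>k. q k \<in> M \<inter> cball 0 (real n)"
      "\<And>k. a k = B (p k)" "\<And>k. b k = B (q k)" by metis
    have mem: "scaleR (1/2) (a k - b k) \<in> B ` (M \<inter> cball 0 (real n))" for k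
    proof -
      have "scaleR (1/2) (p k - q k) \<in> M"
        using pq by (intro csub_scaleR csub_diff M) auto
      moreover have "norm (scaleR (1/2) (p k - q k)) \<le> real n"
      proof -
        have "norm (p k - q k) \<le> norm (p k) + norm (q k)" by (rule norm_triangle_ineq4)
        also have "\<dots> \<le> 2 * real n" using pq(1,2)[of k] by auto
        finally show ?thesis by simp
      qed
      moreover have "B (scaleR (1/2) (p k - q k)) = scaleR (1/2) (a k - b k)"
        by (simp add: bcl_scaleR[OF B] bcl_diff[OF B] pq(3,4))
      ultimately show ?thesis by (metis IntI image_eqI mem_cball_0)
    qed
    have "(\<lambda>k. scaleR (1/2) (a k - b k)) \<longlonglongrightarrow> scaleR (1/2) (u - v)"
      by (intro tendsto_intros a b)
    thus ?thesis unfolding F_def closure_sequential using mem by (intro exI[of _ "\<lambda>k. scaleR (1/2) (a k - b k)"]) blast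
  qed
  have smallF: "s \<in> F n" if "s \<in> S" "norm s < r" for s
  proof -
    have "y + s \<in> S" "y - s \<in> S" using that r csub_add[OF Ssub] csub_diff[OF Ssub] by auto
    moreover have "y + s \<in> ball y r" "y - s \<in> ball y r" using that by (auto simp: dist_norm)
    ultimately have "y + s \<in> F n" "y - s \<in> F n" using r(3) by auto
    moreover have "scaleR (1/2) ((y + s) - (y - s)) = s"
      by (simp add: scaleR_add_right[symmetric])
    ultimately show ?thesis using half by metis
  qed
  define c where "c = 2 * real n / r"
  have c0: "c \<ge> 0" using r by (simp add: c_def)
  have approx: "\<exists>x\<in>M. norm x \<le> c * norm s \<and> norm (s - B x) < e" if s: "s \<in> S" and e: "e > 0" for s e
  proof (cases "s = 0")
    case True thus ?thesis using e csub_zero[OF M] bcl_zero[OF B] by (intro bexI[of _ 0]) auto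
  next
    case False
    define t where "t = r / (2 * norm s)"
    have t: "t > 0" using False r by (simp add: t_def)
    have "scaleR t s \<in> S" using s by (intro csub_scaleR Ssub)
    moreover have "norm (scaleR t s) < r" using t False r by (simp add: t_def)
    ultimately have "scaleR t s \<in> F n" by (rule smallF)
    then obtain z where z: "z \<in> B ` (M \<inter> cball 0 (real n))" "dist z (scaleR t s) < e * t"
      unfolding F_def closure_approachable using e t by (meson mult_pos_pos)
    then obtain x where x: "x \<in> M" "norm x \<le> real n" "z = B x" by auto
    have "scaleR (1/t) x \<in> M" by (intro csub_scaleR M x)
    moreover have "norm (scaleR (1/t) x) \<le> c * norm s"
    proof -
      have "norm (scaleR (1/t) x) = norm x / t" using t by simp
      also have "\<dots> \<le> real n / t" using x(2) t by (simp add: divide_right_mono)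
      also have "\<dots> = c * norm s" using False r by (simp add: t_def c_def field_simps)
      finally show ?thesis .
    qed
    moreover have "norm (s - B (scaleR (1/t) x)) < e"
    proof -
      have "s - B (scaleR (1/t) x) = scaleR (1/t) (scaleR t s - z)"
        using t by (simp add: bcl_scaleR[OF B] x(3) algebra_simps)
      hence "norm (s - B (scaleR (1/t) x)) = norm (scaleR t s - z) / t" using t by simp
      also have "\<dots> < e" using z(2) t by (simp add: dist_norm norm_minus_commute field_simps)
      finally show ?thesis .
    qed
    ultimately show ?thesis by blast
  qed
  define f where "f s = (SOME x. x \<in> M \<and> norm x \<le> c * norm s \<and> norm (s - B x) \<le> norm s / 2)" for s
  have fprop: "f s \<in> M \<and> norm (f s) \<le> c * norm s \<and> norm (s - B (f s)) \<le> norm s / 2" if sS0: "s \<in> S" for s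
  proof -
    have "\<exists>x. x \<in> M \<and> norm x \<le> c * norm s \<and> norm (s - B x) \<le> norm s / 2"
    proof (cases "s = 0")
      case True thus ?thesis using csub_zero[OF M] bcl_zero[OF B] by (intro exI[of _ 0]) auto
    next
      case False
      then obtain x where "x \<in> M" "norm x \<le> c * norm s" "norm (s - B x) < norm s / 2"
        using approx[OF sS0, of "norm s / 2"] by auto
      thus ?thesis by (intro exI[of _ x]) auto
    qed
    thus ?thesis unfolding f_def by (rule someI_ex)
  qed
  show ?thesis
  proof (intro exI[of _ "2 * c"] ballI)
    fix s assume s: "s \<in> B ` M"
    hence sS: "s \<in> S" by (simp add: S_def)
    define \<sigma> where "\<sigma> k = ((\<lambda>u. u - B (f u)) ^^ k) s" for k
    have \<sigma>S: "\<sigma> k \<in> S" for k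
    proof (induction k)
      case 0 thus ?case using sS by (simp add: \<sigma>_def)
    next
      case (Suc k)
      have "B (f (\<sigma> k)) \<in> S" using fprop[OF Suc] by (auto simp: S_def)
      thus ?case using Suc csub_diff[OF Ssub] by (simp add: \<sigma>_def)
    qed
    have \<sigma>Suc: "\<sigma> (Suc k) = \<sigma> k - B (f (\<sigma> k))" for k by (simp add: \<sigma>_def)
    have \<sigma>n: "norm (\<sigma> k) \<le> norm s / 2 ^ k" for k
    proof (induction k)
      case 0 thus ?case by (simp add: \<sigma>_def)
    next
      case (Suc k)
      have "norm (\<sigma> (Suc k)) \<le> norm (\<sigma> k) / 2" using fprop[OF \<sigma>S[of k]] \<sigma>Suc by simp
      also have "\<dots> \<le> norm s / 2 ^ Suc k" using Suc by (simp add: field_simps)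
      finally show ?case .
    qed
    define x where "x k = f (\<sigma> k)" for k
    have xM: "x k \<in> M" for k using fprop[OF \<sigma>S[of k]] by (simp add: x_def)
    have xn: "norm (x k) \<le> c * norm s * (1/2) ^ k" for k
    proof -
      have "norm (x k) \<le> c * norm (\<sigma> k)" using fprop[OF \<sigma>S[of k]] by (simp add: x_def)
      also have "\<dots> \<le> c * (norm s / 2 ^ k)" using \<sigma>n[of k] c0 by (rule mult_left_mono)
      finally show ?thesis by (simp add: power_one_over field_simps)
    qed
    have geo: "summable (\<lambda>k. c * norm s * (1/2::real) ^ k)"
      by (intro summable_mult summable_geometric) simp
    have sn: "summable (\<lambda>k. norm (x k))"
      by (rule summable_comparison_test'[OF geo, of 0]) (use xn in simp)
    have sx: "summable x" using sn by (rule summable_norm_cancel)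
    define X where "X = suminf x"
    have lim: "(\<lambda>N. \<Sum>k<N. x k) \<longlonglongrightarrow> X" unfolding X_def using sx by (rule summable_LIMSEQ)
    have summ: "(\<Sum>k<N. x k) \<in> M" for N
    proof (induction N)
      case 0 thus ?case using csub_zero[OF M] by simp
    next
      case (Suc N) thus ?case using xM csub_add[OF M] by simp
    qed
    have XM: "X \<in> M" by (rule closed_sequentially[OF csub_closed[OF M] _ lim]) (rule summ)
    have tel: "(\<Sum>k<N. B (x k)) = s - \<sigma> N" for N
    proof (induction N)
      case 0 thus ?case by (simp add: \<sigma>_def)
    next
      case (Suc N) thus ?case by (simp add: \<sigma>Suc x_def)
    qed
    have \<sigma>0: "\<sigma> \<longlonglongrightarrow> 0"
    proof (rule tendsto_norm_zero_cancel, rule Lim_null_comparison[where g = "\<lambda>k. norm s * (1/2) ^ k"])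
      show "\<forall>\<^sub>F k in sequentially. norm (norm (\<sigma> k)) \<le> norm s * (1/2) ^ k"
        using \<sigma>n by (simp add: power_one_over field_simps)
      show "(\<lambda>k. norm s * (1/2::real) ^ k) \<longlonglongrightarrow> 0"
        by (intro tendsto_mult_right_zero LIMSEQ_power_zero) simp
    qed
    have bl: "bounded_linear B" by (rule bcl_bounded_linear[OF B])
    have "(\<lambda>N. \<Sum>k<N. B (x k)) \<longlonglongrightarrow> s - 0"
      unfolding tel by (intro tendsto_intros \<sigma>0)
    hence "(\<lambda>k. B (x k)) sums s" by (simp add: sums_def)
    moreover have "(\<lambda>k. B (x k)) sums B X"
      unfolding X_def using bounded_linear.sums[OF bl summable_sums[OF sx]] .
    ultimately have BX: "B X = s" using sums_unique2 by blast
    have "norm X \<le> (\<Sum>k. norm (x k))" unfolding X_def by (rule summable_norm[OF sn])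
    also have "\<dots> \<le> (\<Sum>k. c * norm s * (1/2::real) ^ k)" by (rule suminf_le[OF xn sn geo])
    also have "\<dots> = c * norm s * 2"
      using suminf_mult[of "\<lambda>k. (1/2::real)^k" "c * norm s"] suminf_geometric[of "1/2::real"] by simp
    finally show "\<exists>x\<in>M. B x = s \<and> norm x \<le> 2 * c * norm s" using XM BX by (intro bexI[of _ X]) auto
  qed
qed



lemma proj_perp_norm: assumes K: "closed_csubspace K" shows "norm (x - proj K x) \<le> norm x"
proof -
  have "cinner (x - proj K x) (proj K x) = 0" by (intro proj_prop K)
  hence "(norm x)^2 = (norm (x - proj K x))^2 + (norm (proj K x))^2"
    using norm_sq_add[of "x - proj K x" "proj K x"] by simp
  hence "(norm (x - proj K x))^2 \<le> (norm x)^2" by simp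
  thus ?thesis using power2_le_imp_le[of "norm (x - proj K x)" "norm x"] by simp
qed

lemma normA_le: "normA A u \<le> normA A v \<longleftrightarrow> Re (cinner (A u) u) \<le> Re (cinner (A v) v)"
  by (simp add: normA_def)

theorem mainTheorem15:
  fixes A B :: "'a::chilbert_space \<Rightarrow> 'a" and M :: "'a set"
  assumes "separable_space TYPE('a)"
    and "positive_op A"
    and "bounded_clinear B" and "closed (range B)"
    and "closed_csubspace M" and "closed (B ` M)"
  shows "(\<exists>G. is_A_inverse_restricted A B M G) \<longleftrightarrow> compatible A (B ` M)"
proof -
  note posA = assms(2) and bB = assms(3) and Msub = assms(5) and clS = assms(6)
  have bA: "bounded_clinear A" using posA by (simp add: positive_op_def)
  define S where "S = B ` M"
  have Ssub: "closed_csubspace S" unfolding S_def by (rule image_csub[OF bB Msub clS])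
  have qnn: "0 \<le> Re (cinner (A u) u)" for u
    using posA by (simp add: positive_op_def less_eq_complex_def)
  show ?thesis
  proof
    assume "\<exists>G. is_A_inverse_restricted A B M G"
    then obtain G where bG: "bounded_clinear G" and rG: "range G \<subseteq> M"
      and minG: "\<And>y x. x \<in> M \<Longrightarrow> normA A (y - B (G y)) \<le> normA A (y - B x)"
      unfolding is_A_inverse_restricted_def by blast
    define P where "P y = B (G y)" for y
    have bP: "bounded_clinear P" unfolding P_def by (rule bcl_comp[OF bB bG])
    have PS: "P y \<in> S" for y using rG by (auto simp: P_def S_def)
    have orth: "cinner (A (y - P y)) t = 0" if t: "t \<in> S" for y t
    proof (rule min_orth[OF posA])
      fix \<tau>
      have "P y + \<tau> *\<^sub>C t \<in> S" by (intro csub_add csub_scaleC Ssub PS t)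
      then obtain x where x: "x \<in> M" "P y + \<tau> *\<^sub>C t = B x" by (auto simp: S_def)
      have "normA A (y - P y) \<le> normA A (y - B x)" using minG[OF x(1)] by (simp add: P_def)
      moreover have "y - B x = y - P y - \<tau> *\<^sub>C t" using x(2) by (metis diff_diff_eq)
      ultimately show "Re (cinner (A (y - P y)) (y - P y)) \<le> Re (cinner (A (y - P y - \<tau> *\<^sub>C t)) (y - P y - \<tau> *\<^sub>C t))"
        by (simp add: normA_le)
    qed
    have Au0: "A (s - P s) = 0" if s: "s \<in> S" for s
    proof (rule pos_kernel[OF posA])
      have "s - P s \<in> S" by (intro csub_diff Ssub s PS)
      thus "Re (cinner (A (s - P s)) (s - P s)) = 0" using orth[of "s - P s" s] by simp
    qed
    define E where "E = proj S"
    have bE: "bounded_clinear E" unfolding E_def by (rule proj_bcl[OF Ssub])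
    have ES: "E x \<in> S" for x unfolding E_def by (rule proj_prop(1)[OF Ssub])
    have Eid: "E s = s" if "s \<in> S" for s unfolding E_def using proj_id[OF Ssub that] .
    define Q where "Q x = E x + P (x - E x)" for x
    have bQ: "bounded_clinear Q"
    proof -
      have "bounded_clinear (\<lambda>x. x - E x)" by (rule bcl_diff_fun[OF bcl_id bE])
      from bcl_plus[OF bE bcl_comp[OF bP this]] show ?thesis unfolding Q_def .
    qed
    have QS: "Q x \<in> S" for x unfolding Q_def by (intro csub_add Ssub ES PS)
    have Qid: "Q s = s" if "s \<in> S" for s
      using that by (simp add: Q_def Eid bcl_zero[OF bP])
    have QQ: "Q \<circ> Q = Q" by (rule ext) (simp add: Qid QS)
    have rQ: "range Q = S"
    proof
      show "range Q \<subseteq> S" using QS by blast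
      show "S \<subseteq> range Q" using Qid by (metis image_eqI rangeI subsetI)
    qed
    have AQ: "A (Q x) = A (P x)" for x
    proof -
      have "A (E x) = A (P (E x))" using Au0[OF ES[of x]] bcl_diff[OF bA] by simp
      hence "A (Q x) = A (P (E x)) + A (P (x - E x))" by (simp add: Q_def bcl_add[OF bA])
      also have "\<dots> = A (P (E x) + P (x - E x))" by (simp add: bcl_add[OF bA])
      also have "P (E x) + P (x - E x) = P x" using bcl_add[OF bP, of "E x" "x - E x"] by simp
      finally show ?thesis .
    qed
    have "A \<circ> Q = adj Q \<circ> A"
    proof (rule ext)
      fix x
      have "adj Q (A x) = A (Q x)"
      proof (rule adj_apply[OF bQ])
        fix y
        have u: "Q y - P y = E y - P (E y)" by (simp add: Q_def bcl_diff[OF bP])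
        have "cinner (A x) (Q y - P y) = 0"
          unfolding u using pos_selfadj[OF posA, of x "E y - P (E y)"] Au0[OF ES[of y]] by simp
        hence "cinner (A x) (Q y) = cinner (A x) (P y)" by (simp add: cinner_diff_right)
        also have "\<dots> = cinner (A (P x)) (P y)"
          using orth[OF PS[of y], of x] by (simp add: bcl_diff[OF bA] cinner_diff_left)
        also have "\<dots> = cinner (A (P x)) y"
        proof -
          have "cinner (A (P x)) y = cinner (P x) (A y)" by (rule pos_selfadj[OF posA])
          also have "\<dots> = cnj (cinner (A y) (P x))" by (metis cinner_conj)
          also have "cinner (A y) (P x) = cinner (A (P y)) (P x)"
            using orth[OF PS[of x], of y] by (simp add: bcl_diff[OF bA] cinner_diff_left)
          also have "cnj (cinner (A (P y)) (P x)) = cinner (P x) (A (P y))" by (metis cinner_conj)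
          also have "\<dots> = cinner (A (P x)) (P y)" by (rule pos_selfadj[OF posA, symmetric])
          finally show ?thesis by simp
        qed
        finally show "cinner (A (Q x)) y = cinner (A x) (Q y)" by (simp add: AQ)
      qed
      thus "(A \<circ> Q) x = (adj Q \<circ> A) x" by simp
    qed
    thus "compatible A (B ` M)" unfolding compatible_def S_def[symmetric]
      using bQ QQ rQ by blast
  next
    assume "compatible A (B ` M)"
    then obtain Q where bQ: "bounded_clinear Q" and QQ: "Q \<circ> Q = Q" and rQ: "range Q = S"
      and AQ: "A \<circ> Q = adj Q \<circ> A"
      unfolding compatible_def S_def by blast
    have Qid: "Q s = s" if "s \<in> S" for s
      using that rQ QQ by (metis comp_apply rangeE)
    define K where "K = M \<inter> B -` {0}"
    have Ksub: "closed_csubspace K"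
      unfolding closed_csubspace_def K_def
    proof (intro conjI ballI allI)
      show "closed (M \<inter> B -` {0})"
        by (intro closed_Int csub_closed[OF Msub] continuous_closed_vimage)
           (auto intro: linear_continuous_at[OF bcl_bounded_linear[OF bB]])
    qed (auto simp: csub_zero[OF Msub] csub_add[OF Msub] csub_scaleC[OF Msub]
          bcl_zero[OF bB] bcl_add[OF bB] bcl_scaleC[OF bB])
    obtain C0 where C0: "\<And>s. s \<in> S \<Longrightarrow> \<exists>x\<in>M. B x = s \<and> norm x \<le> C0 * norm s"
      using open_mapping[OF bB Msub clS] unfolding S_def by blast
    define C where "C = max C0 0"
    have C: "\<exists>x\<in>M. B x = s \<and> norm x \<le> C * norm s" if sS1: "s \<in> S" for s
    proof -
      obtain x where "x \<in> M" "B x = s" "norm x \<le> C0 * norm s" using C0[OF sS1] by blast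
      moreover have "C0 * norm s \<le> C * norm s" by (simp add: C_def mult_right_mono)
      ultimately show ?thesis by force
    qed
    have C00: "C \<ge> 0" by (simp add: C_def)
    define R where "R s = (SOME x. x \<in> M \<and> B x = s \<and> norm x \<le> C * norm s)" for s
    have R: "R s \<in> M \<and> B (R s) = s \<and> norm (R s) \<le> C * norm s" if "s \<in> S" for s
      unfolding R_def using C[OF that] by (metis (mono_tags, lifting) someI_ex)
    define L where "L s = R s - proj K (R s)" for s
    have KM: "K \<subseteq> M" by (auto simp: K_def)
    have LM: "L s \<in> M" if "s \<in> S" for s
      unfolding L_def using R[OF that] proj_prop(1)[OF Ksub, of "R s"] KM csub_diff[OF Msub] by blast
    have BL: "B (L s) = s" if "s \<in> S" for s
      using R[OF that] proj_prop(1)[OF Ksub, of "R s"] by (simp add: L_def bcl_diff[OF bB] K_def)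
    have Lperp: "cinner (L s) k = 0" if "k \<in> K" for s k
      unfolding L_def by (rule proj_prop(2)[OF Ksub that])
    have Lnorm: "norm (L s) \<le> C * norm s" if "s \<in> S" for s
      unfolding L_def using proj_perp_norm[OF Ksub, of "R s"] R[OF that] by linarith
    have uniq: "u = v" if "u \<in> M" "v \<in> M" "B u = B v" "\<And>k. k \<in> K \<Longrightarrow> cinner u k = 0"
      "\<And>k. k \<in> K \<Longrightarrow> cinner v k = 0" for u v
    proof -
      have d: "u - v \<in> K" using that(1-3) by (simp add: K_def csub_diff[OF Msub] bcl_diff[OF bB])
      have "cinner (u - v) (u - v) = 0" using that(4)[OF d] that(5)[OF d] by (simp add: cinner_diff_left)
      hence "u - v = 0" using cinner_eq_zero_iff by blast
      thus ?thesis by simp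
    qed
    have Ladd: "L (s + t) = L s + L t" if "s \<in> S" "t \<in> S" for s t
    proof (rule uniq)
      show "L (s + t) \<in> M" "L s + L t \<in> M" using that LM csub_add[OF Ssub] csub_add[OF Msub] by auto
      show "B (L (s + t)) = B (L s + L t)" using that BL csub_add[OF Ssub] by (simp add: bcl_add[OF bB])
      show "cinner (L (s + t)) k = 0" if "k \<in> K" for k using Lperp[OF that] .
      show "cinner (L s + L t) k = 0" if "k \<in> K" for k using Lperp[OF that] by (simp add: cinner_add_left)
    qed
    have Lsc: "L (a *\<^sub>C s) = a *\<^sub>C L s" if "s \<in> S" for a s
    proof (rule uniq)
      show "L (a *\<^sub>C s) \<in> M" "a *\<^sub>C L s \<in> M" using that LM csub_scaleC[OF Ssub] csub_scaleC[OF Msub] by auto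
      show "B (L (a *\<^sub>C s)) = B (a *\<^sub>C L s)" using that BL csub_scaleC[OF Ssub] by (simp add: bcl_scaleC[OF bB])
      show "cinner (L (a *\<^sub>C s)) k = 0" if "k \<in> K" for k using Lperp[OF that] .
      show "cinner (a *\<^sub>C L s) k = 0" if "k \<in> K" for k using Lperp[OF that] by (simp add: cinner_scaleC_left)
    qed
    have QS: "Q y \<in> S" for y using rQ by blast
    define G where "G y = L (Q y)" for y
    obtain KQ where KQ: "\<And>y. norm (Q y) \<le> norm y * KQ" using bcl_bound[OF bQ] by blast
    have bG: "bounded_clinear G"
      unfolding bounded_clinear_def
    proof (intro conjI allI)
      fix x y show "G (x + y) = G x + G y" by (simp add: G_def bcl_add[OF bQ] Ladd QS)
    next
      fix a x show "G (a *\<^sub>C x) = a *\<^sub>C G x" by (simp add: G_def bcl_scaleC[OF bQ] Lsc QS)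
    next
      show "\<exists>K'. \<forall>x. norm (G x) \<le> norm x * K'"
      proof (intro exI allI)
        fix x
        have "norm (G x) \<le> C * norm (Q x)" unfolding G_def by (rule Lnorm[OF QS])
        also have "\<dots> \<le> C * (norm x * KQ)" using KQ[of x] C00 by (rule mult_left_mono)
        finally show "norm (G x) \<le> norm x * (C * KQ)" by (simp add: algebra_simps)
      qed
    qed
    have BG: "B (G y) = Q y" for y by (simp add: G_def BL QS)
    have rG: "range G \<subseteq> M" using LM QS by (auto simp: G_def)
    have minG: "normA A (y - B (G y)) \<le> normA A (y - B x)" if x: "x \<in> M" for y x
    proof -
      define w where "w = Q y - B x"
      have wS: "w \<in> S" unfolding w_def using x QS by (intro csub_diff Ssub) (auto simp: S_def)
      have AQy: "A (Q y) = adj Q (A y)" using AQ by (metis comp_apply)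
      have o: "cinner (A (y - Q y)) w = 0"
      proof -
        have "cinner (A (Q y)) w = cinner (A y) (Q w)" unfolding AQy by (rule adj_prop[OF bQ])
        also have "\<dots> = cinner (A y) w" using Qid[OF wS] by simp
        finally show ?thesis by (simp add: bcl_diff[OF bA] cinner_diff_left)
      qed
      have eq: "y - B x = (y - Q y) - (-1) *\<^sub>C w" by (simp add: scaleC_minus_one w_def)
      have "Re (cinner (A (y - Q y)) (y - Q y)) \<le> Re (cinner (A (y - B x)) (y - B x))"
        unfolding eq quad_expand[OF posA] using o qnn[of w] by simp
      thus ?thesis by (simp add: normA_le BG)
    qed
    have "is_A_inverse_restricted A B M G"
      unfolding is_A_inverse_restricted_def using bG rG minG by blast
    thus "\<exists>G. is_A_inverse_restricted A B M G" by blast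
  qed
qed


end
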